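(* Let $O$ be a validated totally-ordered object, $S$ a sequence of operations, $i\neq j$ processes, and $op_i, op_j\notin S$ operations issued by $i$ and $j$ respectively, with $\mathrm{valid}(S,op_i,i)=\mathit{True}$, $\mathrm{valid}(S,op_j,j)=\mathit{True}$, $\mathrm{valid}(S\|op_j,op_i,i)=\mathit{False}$ and $\mathrm{valid}(S\|op_i,op_j,j)=\mathit{True}$. Then, in an asynchronous system in which at most one of $i,j$ crashes, the following algorithm solves consensus between $i$ and $j$ (every correct one decides, both decide the same value, and it was proposed by $i$ or $j$). Setup: $O$ is initialized with state $S$; $c_i, c_j$ are reliable atomic SWMR registers written only by $i$ resp. $j$, initially $\bot$. For each process $k\in\{i,j\}$ there are reliable SWMR vectors $oplist_k$ (written only by $k$) and $reslist_k$ (written only by $O$), all entries initially $\bot$. LoggedApply$(op,k)$ at process $k$, with local counter $c_k$ starting at $1$: write $op$ into $oplist_k[c_k]$, wait until $reslist_k[c_k]\neq\bot$, read it as $res$, increment $c_k$, return $res$. The object runs, for each $k$, a task with its own counter $d_k$ starting at $1$: repeatedly wait until $oplist_k[d_k]\neq\bot$, read $op$ from it, compute $res\leftarrow O.\mathrm{apply}(op,k)$, write $res$ into $reslist_k[d_k]$, increment $d_k$. Process $i$, proposing $v_1$: write $v_1$ to $c_i$; $res\leftarrow$ LoggedApply$(op_i,i)$; if $res=(\mathit{NACK},-)$ read $v_2$ from $c_j$ and decide it, else decide $v_1$. Process $j$, proposing $v_2$: write $v_2$ to $c_j$; $res\leftarrow$ LoggedApply$(op_j,j)$; if there is an index $c$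 with $oplist_i[c]=op_i$, then wait until $reslist_i[c]\neq\bot$, read it as $opires$, and if $opires=(\mathit{ACK},r)$ read $v_1$ from $c_i$ and decide $v_1$, while if $opires=(\mathit{NACK},-)$ decide $v_2$; if there is no such index, decide $v_2$.
   Context: Validated object: given a predicate $\mathrm{valid}(\cdot, op, i)$ and function $\mathrm{execute}(\cdot, op, i)$, first argument a strictly partially ordered set of operations (a sequence when totally ordered), $op$ an operation, $i$ its issuer. Clients use $\mathrm{apply}(op,i)$, returning $(\mathit{ACK}, r)$ if $op$ is found valid and executed with result $r$, and $(\mathit{NACK},-)$ otherwise. For a sequence $S$, $S\|op$ denotes $S$ followed by $op$. The history of a run contains only operations for which $\mathrm{apply}$ returns $\mathit{ACK}$; $C(R)$ is the set of complete such operations; $op\rightarrow op'$ means the response of $op$ precedes the invocation of $op'$. Validated totally-ordered object: in every run $R$ there is a total order $\ll$ on $C(R)$ such that (1) $op\rightarrow op'$ implies $op\ll op'$; (2) for every $op\in C(R)$ issued by $i$, with $P(op)=\{op'\in C(R): op'\ll op\}$, $\mathrm{valid}(\langle P(op),\ll\rangle,op,i)=\mathit{True}$ and $op$ returns $\mathrm{execute}(\langle P(op),\ll\rangle,op,i)$. The object $O$ and the shared memory are assumed reliable (never fail). *)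

theory Defs
  imports Main
begin

datatype 'r resp = ACK 'r | NACK

(* program counters of the two processes (shared datatype, meaning depends on process) *)
datatype ppc = P0 | P1 | P2 | P3 | P4 | P5 | PDone

datatype ('op, 'r) tpc = TWait | TApply 'op | TWrite "'r resp"

datatype 'p actor = Proc 'p | Task 'p

(* global state: shared memory, object state, local states.
   Registers/vector entries: None = bottom. Decisions: None = undecided,
   Some x = decided the value x read (x itself possibly bottom). *)
record ('p, 'op, 'v, 'r) sys =
  sys_creg    :: "'p \<Rightarrow> 'v option"
  sys_oplist  :: "'p \<Rightarrow> nat \<Rightarrow> 'op option"
  sys_reslist :: "'p \<Rightarrow> nat \<Rightarrow> 'r resp option"
  sys_ostate  :: "'op list"
  sys_pc      :: "'p \<Rightarrow> ppc"
  sys_ctr     :: "'p \<Rightarrow> nat"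
  sys_lres    :: "'p \<Rightarrow> 'r resp option"
  sys_jidx    :: nat
  sys_dec     :: "'p \<Rightarrow> 'v option option"
  sys_tpc     :: "'p \<Rightarrow> ('op, 'r) tpc"
  sys_dctr    :: "'p \<Rightarrow> nat"

definition init_sys :: "'op list \<Rightarrow> ('p, 'op, 'v, 'r) sys" where
  "init_sys S = \<lparr> sys_creg = (\<lambda>_. None), sys_oplist = (\<lambda>_ _. None),
     sys_reslist = (\<lambda>_ _. None), sys_ostate = S, sys_pc = (\<lambda>_. P0),
     sys_ctr = (\<lambda>_. 1), sys_lres = (\<lambda>_. None), sys_jidx = 0,
     sys_dec = (\<lambda>_. None), sys_tpc = (\<lambda>_. TWait), sys_dctr = (\<lambda>_. 1) \<rparr>"

(* one atomic step of process i (proposing v1, using op_i); waiting = no change *)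
definition next_i :: "'p \<Rightarrow> 'p \<Rightarrow> 'op \<Rightarrow> 'v \<Rightarrow> ('p, 'op, 'v, 'r) sys \<Rightarrow> ('p, 'op, 'v, 'r) sys" where
  "next_i i j opi v1 s = (case sys_pc s i of
     P0 \<Rightarrow> s\<lparr> sys_creg := (sys_creg s)(i := Some v1), sys_pc := (sys_pc s)(i := P1) \<rparr>
   | P1 \<Rightarrow> s\<lparr> sys_oplist := (sys_oplist s)(i := (sys_oplist s i)(sys_ctr s i := Some opi)),
             sys_pc := (sys_pc s)(i := P2) \<rparr>
   | P2 \<Rightarrow> (case sys_reslist s i (sys_ctr s i) of
             None \<Rightarrow> s
           | Some r \<Rightarrow> s\<lparr> sys_lres := (sys_lres s)(i := Some r),
                          sys_ctr := (sys_ctr s)(i := sys_ctr s i + 1),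
                          sys_pc := (sys_pc s)(i := P3) \<rparr>)
   | P3 \<Rightarrow> (if sys_lres s i = Some NACK
           then s\<lparr> sys_dec := (sys_dec s)(i := Some (sys_creg s j)), sys_pc := (sys_pc s)(i := PDone) \<rparr>
           else s\<lparr> sys_dec := (sys_dec s)(i := Some (Some v1)), sys_pc := (sys_pc s)(i := PDone) \<rparr>)
   | _ \<Rightarrow> s)"

(* one atomic step of process j (proposing v2, using op_j); nondeterministic choice of index c *)
definition step_j :: "'p \<Rightarrow> 'p \<Rightarrow> 'op \<Rightarrow> 'op \<Rightarrow> 'v \<Rightarrow> ('p, 'op, 'v, 'r) sys \<Rightarrow> ('p, 'op, 'v, 'r) sys \<Rightarrow> bool" where
  "step_j i j opi opj v2 s s' = (case sys_pc s j of
     P0 \<Rightarrow> s' = s\<lparr> sys_creg := (sys_creg s)(j := Some v2), sys_pc := (sys_pc s)(j := P1) \<rparr>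
   | P1 \<Rightarrow> s' = s\<lparr> sys_oplist := (sys_oplist s)(j := (sys_oplist s j)(sys_ctr s j := Some opj)),
             sys_pc := (sys_pc s)(j := P2) \<rparr>
   | P2 \<Rightarrow> (case sys_reslist s j (sys_ctr s j) of
             None \<Rightarrow> s' = s
           | Some r \<Rightarrow> s' = s\<lparr> sys_lres := (sys_lres s)(j := Some r),
                          sys_ctr := (sys_ctr s)(j := sys_ctr s j + 1),
                          sys_pc := (sys_pc s)(j := P3) \<rparr>)
   | P3 \<Rightarrow> (if (\<exists>c. sys_oplist s i c = Some opi)
           then (\<exists>c. sys_oplist s i c = Some opi \<and>
                   s' = s\<lparr> sys_jidx := c, sys_pc := (sys_pc s)(j := P4) \<rparr>)
           else s' = s\<lparr> sys_dec := (sys_dec s)(j := Some (Some v2)), sys_pc := (sys_pc s)(j := PDone) \<rparr>)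
   | P4 \<Rightarrow> (case sys_reslist s i (sys_jidx s) of
             None \<Rightarrow> s' = s
           | Some (ACK r) \<Rightarrow> s' = s\<lparr> sys_pc := (sys_pc s)(j := P5) \<rparr>
           | Some NACK \<Rightarrow> s' = s\<lparr> sys_dec := (sys_dec s)(j := Some (Some v2)),
                                  sys_pc := (sys_pc s)(j := PDone) \<rparr>)
   | P5 \<Rightarrow> s' = s\<lparr> sys_dec := (sys_dec s)(j := Some (sys_creg s i)), sys_pc := (sys_pc s)(j := PDone) \<rparr>
   | PDone \<Rightarrow> s' = s)"

(* one atomic step of the object's task for process k; O.apply is atomic (linearization point) *)
definition next_task :: "('op list \<Rightarrow> 'op \<Rightarrow> 'p \<Rightarrow> bool) \<Rightarrow> ('op list \<Rightarrow> 'op \<Rightarrow> 'p \<Rightarrow> 'r) \<Rightarrow>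
    'p \<Rightarrow> ('p, 'op, 'v, 'r) sys \<Rightarrow> ('p, 'op, 'v, 'r) sys" where
  "next_task valid execute k s = (case sys_tpc s k of
     TWait \<Rightarrow> (case sys_oplist s k (sys_dctr s k) of
                None \<Rightarrow> s
              | Some op \<Rightarrow> s\<lparr> sys_tpc := (sys_tpc s)(k := TApply op) \<rparr>)
   | TApply op \<Rightarrow> (if valid (sys_ostate s) op k
                   then s\<lparr> sys_ostate := sys_ostate s @ [op],
                           sys_tpc := (sys_tpc s)(k := TWrite (ACK (execute (sys_ostate s) op k))) \<rparr>
                   else s\<lparr> sys_tpc := (sys_tpc s)(k := TWrite NACK) \<rparr>)
   | TWrite r \<Rightarrow> s\<lparr> sys_reslist := (sys_reslist s)(k := (sys_reslist s k)(sys_dctr s k := Some r)),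
                    sys_dctr := (sys_dctr s)(k := sys_dctr s k + 1),
                    sys_tpc := (sys_tpc s)(k := TWait) \<rparr>)"

definition sys_step :: "('op list \<Rightarrow> 'op \<Rightarrow> 'p \<Rightarrow> bool) \<Rightarrow> ('op list \<Rightarrow> 'op \<Rightarrow> 'p \<Rightarrow> 'r) \<Rightarrow>
    'p \<Rightarrow> 'p \<Rightarrow> 'op \<Rightarrow> 'op \<Rightarrow> 'v \<Rightarrow> 'v \<Rightarrow> 'p actor \<Rightarrow>
    ('p, 'op, 'v, 'r) sys \<Rightarrow> ('p, 'op, 'v, 'r) sys \<Rightarrow> bool" where
  "sys_step valid execute i j opi opj v1 v2 a s s' =
     (a = Proc i \<and> s' = next_i i j opi v1 s
    \<or> a = Proc j \<and> step_j i j opi opj v2 s s'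
    \<or> a = Task i \<and> s' = next_task valid execute i s
    \<or> a = Task j \<and> s' = next_task valid execute j s)"

definition is_run :: "('op list \<Rightarrow> 'op \<Rightarrow> 'p \<Rightarrow> bool) \<Rightarrow> ('op list \<Rightarrow> 'op \<Rightarrow> 'p \<Rightarrow> 'r) \<Rightarrow>
    'op list \<Rightarrow> 'p \<Rightarrow> 'p \<Rightarrow> 'op \<Rightarrow> 'op \<Rightarrow> 'v \<Rightarrow> 'v \<Rightarrow>
    (nat \<Rightarrow> ('p, 'op, 'v, 'r) sys) \<Rightarrow> (nat \<Rightarrow> 'p actor) \<Rightarrow> bool" where
  "is_run valid execute S i j opi opj v1 v2 s a =
     (s 0 = init_sys S \<and>
      (\<forall>n. sys_step valid execute i j opi opj v1 v2 (a n) (s n) (s (Suc n))))"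

(* an actor is correct iff it takes infinitely many steps (a crashed one takes finitely many) *)
definition correct :: "(nat \<Rightarrow> 'p actor) \<Rightarrow> 'p actor \<Rightarrow> bool" where
  "correct a x = (\<forall>n. \<exists>m\<ge>n. a m = x)"

(* admissible schedules: the object (its tasks) never fails, at most one of i, j crashes *)
definition fair :: "'p \<Rightarrow> 'p \<Rightarrow> (nat \<Rightarrow> 'p actor) \<Rightarrow> bool" where
  "fair i j a = (correct a (Task i) \<and> correct a (Task j) \<and>
                 (correct a (Proc i) \<or> correct a (Proc j)))"

end

theory Submission
  imports Defs
begin


definition rk :: "ppc \<Rightarrow> nat" where
  "rk p = (case p of P0 \<Rightarrow> 0 | P1 \<Rightarrow> 1 | P2 \<Rightarrow> 2 | P3 \<Rightarrow> 3 | P4 \<Rightarrow> 4 | P5 \<Rightarrow> 5 | PDone \<Rightarrow> 6)"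

lemma progress:
  fixes s :: "nat \<Rightarrow> 's" and a :: "nat \<Rightarrow> 'x" and f :: "'s \<Rightarrow> nat"
  assumes c: "\<forall>n. \<exists>m\<ge>n. a m = x"
  and st: "\<And>n. P (s n) \<Longrightarrow> Q (s (Suc n)) \<or> (P (s (Suc n)) \<and> f (s (Suc n)) \<le> f (s n) \<and> (a n = x \<longrightarrow> f (s (Suc n)) < f (s n)))"
  and p: "P (s n0)"
  shows "\<exists>m\<ge>n0. Q (s m)"
proof -
  have "\<forall>n. P (s n) \<longrightarrow> f (s n) = v \<longrightarrow> (\<exists>m\<ge>n. Q (s m))" for v
  proof (induction v rule: less_induct)
    case (less v)
    show ?case
    proof (intro allI impI)
      fix n assume Pn: "P (s n)" and fv: "f (s n) = v"
      obtain m where m: "m \<ge> n" "a m = x" using c by blast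
      have aux: "n + d \<le> m \<longrightarrow> (\<exists>m'\<ge>n. Q (s m')) \<or> (P (s (n+d)) \<and> f (s (n+d)) \<le> v)" for d
      proof (induction d)
        case 0
        then show ?case using Pn fv by simp
      next
        case (Suc d)
        show ?case
        proof
          assume le: "n + Suc d \<le> m"
          from Suc le have "(\<exists>m'\<ge>n. Q (s m')) \<or> (P (s (n+d)) \<and> f (s (n+d)) \<le> v)" by simp
          then show "(\<exists>m'\<ge>n. Q (s m')) \<or> (P (s (n+Suc d)) \<and> f (s (n+Suc d)) \<le> v)"
          proof
            assume h: "P (s (n+d)) \<and> f (s (n+d)) \<le> v"
            from st[of "n+d"] h have "Q (s (Suc (n+d))) \<or> (P (s (Suc (n+d))) \<and> f (s (Suc (n+d))) \<le> f (s (n+d)))"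
              by blast
            then show ?thesis using h by (metis add_Suc_right le_SucI le_add1 order_trans)
          qed simp
        qed
      qed
      from aux[of "m - n"] m have "(\<exists>m'\<ge>n. Q (s m')) \<or> (P (s m) \<and> f (s m) \<le> v)" by simp
      then show "\<exists>m'\<ge>n. Q (s m')"
      proof
        assume h: "P (s m) \<and> f (s m) \<le> v"
        from st[of m] h m(2) have "Q (s (Suc m)) \<or> (P (s (Suc m)) \<and> f (s (Suc m)) < v)"
          by auto
        then show ?thesis
        proof
          assume "Q (s (Suc m))" then show ?thesis using m(1) by (metis le_SucI)
        next
          assume h2: "P (s (Suc m)) \<and> f (s (Suc m)) < v"
          then obtain m' where "m' \<ge> Suc m" "Q (s m')" using less[of "f (s (Suc m))"] by blast
          then show ?thesis using m(1) by (metis Suc_leD order_trans)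
        qed
      qed
    qed
  qed
  then show ?thesis using p by blast
qed

definition tres :: "'p \<Rightarrow> ('p,'op,'v,'r) sys \<Rightarrow> 'r resp option" where
  "tres k t = (case sys_tpc t k of TWrite r \<Rightarrow> Some r | _ \<Rightarrow> sys_reslist t k 1)"

definition TI :: "'p \<Rightarrow> 'op \<Rightarrow> ('p,'op,'v,'r) sys \<Rightarrow> bool" where
"TI k opk t =
 ((sys_tpc t k = TWait \<and> sys_dctr t k = 1 \<and> sys_reslist t k = (\<lambda>_. None))
 \<or> (sys_tpc t k = TApply opk \<and> sys_dctr t k = 1 \<and> sys_reslist t k = (\<lambda>_. None) \<and> sys_oplist t k 1 = Some opk)
 \<or> (\<exists>r. sys_tpc t k = TWrite r \<and> sys_dctr t k = 1 \<and> sys_reslist t k = (\<lambda>_. None) \<and> sys_oplist t k 1 = Some opk)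
 \<or> (\<exists>r. sys_tpc t k = TWait \<and> sys_dctr t k = 2 \<and> sys_reslist t k = (\<lambda>_. None)(1 := Some r) \<and> sys_oplist t k 1 = Some opk))"

definition PC :: "'p \<Rightarrow> 'op \<Rightarrow> 'v \<Rightarrow> ('p,'op,'v,'r) sys \<Rightarrow> bool" where
"PC k opk vk t =
  (sys_oplist t k = (if sys_pc t k \<in> {P0,P1} then (\<lambda>_. None) else (\<lambda>_. None)(1 := Some opk))
  \<and> sys_creg t k = (if sys_pc t k = P0 then None else Some vk)
  \<and> sys_ctr t k = (if sys_pc t k \<in> {P0,P1,P2} then 1 else 2)
  \<and> (sys_dec t k = None) = (sys_pc t k \<noteq> PDone))"

locale cons =
  fixes valid :: "'op list \<Rightarrow> 'op \<Rightarrow> 'p \<Rightarrow> bool"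
    and execute :: "'op list \<Rightarrow> 'op \<Rightarrow> 'p \<Rightarrow> 'r"
    and S :: "'op list" and i j :: 'p and opi opj :: 'op and v1 v2 :: 'v
  assumes ij: "i \<noteq> j"
    and vi: "valid S opi i" and vj: "valid S opj j"
    and nvi: "\<not> valid (S @ [opj]) opi i"
    and vji: "valid (S @ [opi]) opj j"
begin

definition Inv :: "('p,'op,'v,'r) sys \<Rightarrow> bool" where
"Inv t = (TI i opi t \<and> TI j opj t \<and> PC i opi v1 t \<and> PC j opj v2 t
  \<and> sys_pc t i \<in> {P0,P1,P2,P3,PDone}
  \<and> (sys_pc t i \<in> {P3,PDone} \<longrightarrow> sys_lres t i = sys_reslist t i 1 \<and> sys_reslist t i 1 \<noteq> None)
  \<and> (\<forall>x. sys_dec t i = Some x \<longrightarrow> (x = Some v1 \<and> (\<exists>r. tres i t = Some (ACK r))) \<or> (x = Some v2 \<and> tres i t = Some NACK))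
  \<and> (sys_pc t j \<in> {P3,P4,P5,PDone} \<longrightarrow> sys_reslist t j 1 \<noteq> None)
  \<and> (sys_pc t j \<in> {P4,P5} \<longrightarrow> sys_jidx t = 1 \<and> sys_oplist t i 1 = Some opi)
  \<and> (sys_pc t j = P5 \<longrightarrow> (\<exists>r. sys_reslist t i 1 = Some (ACK r)))
  \<and> (\<forall>y. sys_dec t j = Some y \<longrightarrow> (y = Some v1 \<and> (\<exists>r. tres i t = Some (ACK r))) \<or> (y = Some v2 \<and> (tres i t = Some NACK \<or> tres i t = None)))
  \<and> (tres i t = None \<and> tres j t = None \<longrightarrow> sys_ostate t = S)
  \<and> (tres i t \<noteq> None \<and> tres j t = None \<longrightarrow> sys_ostate t = S @ [opi] \<and> (\<exists>r. tres i t = Some (ACK r)))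
  \<and> (tres i t = None \<and> tres j t \<noteq> None \<longrightarrow> sys_ostate t = S @ [opj])
  \<and> (tres i t \<noteq> None \<and> tres j t \<noteq> None \<longrightarrow> (sys_ostate t = S @ [opi, opj] \<and> (\<exists>r. tres i t = Some (ACK r))) \<or> (sys_ostate t = S @ [opj] \<and> tres i t = Some NACK)))"

lemma inv_init: "Inv (init_sys S)"
  using ij by (auto simp: Inv_def init_sys_def TI_def PC_def tres_def)

lemma
  assumes "Inv t"
  shows iTIi: "TI i opi t" and iTIj: "TI j opj t" and iPCi: "PC i opi v1 t" and iPCj: "PC j opj v2 t"
  and ipci: "sys_pc t i \<in> {P0,P1,P2,P3,PDone}"
  and ilres: "sys_pc t i \<in> {P3,PDone} \<Longrightarrow> sys_lres t i = sys_reslist t i 1 \<and> sys_reslist t i 1 \<noteq> None"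
  and idi: "sys_dec t i = Some x \<Longrightarrow> (x = Some v1 \<and> (\<exists>r. tres i t = Some (ACK r))) \<or> (x = Some v2 \<and> tres i t = Some NACK)"
  and irj: "sys_pc t j \<in> {P3,P4,P5,PDone} \<Longrightarrow> sys_reslist t j 1 \<noteq> None"
  and ijx: "sys_pc t j \<in> {P4,P5} \<Longrightarrow> sys_jidx t = 1 \<and> sys_oplist t i 1 = Some opi"
  and ij5: "sys_pc t j = P5 \<Longrightarrow> (\<exists>r. sys_reslist t i 1 = Some (ACK r))"
  and idj: "sys_dec t j = Some y \<Longrightarrow> (y = Some v1 \<and> (\<exists>r. tres i t = Some (ACK r))) \<or> (y = Some v2 \<and> (tres i t = Some NACK \<or> tres i t = None))"
  and ios1: "tres i t = None \<Longrightarrow> tres j t = None \<Longrightarrow> sys_ostate t = S"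
  and ios2: "tres i t \<noteq> None \<Longrightarrow> tres j t = None \<Longrightarrow> sys_ostate t = S @ [opi] \<and> (\<exists>r. tres i t = Some (ACK r))"
  and ios3: "tres i t = None \<Longrightarrow> tres j t \<noteq> None \<Longrightarrow> sys_ostate t = S @ [opj]"
  and ios4: "tres i t \<noteq> None \<Longrightarrow> tres j t \<noteq> None \<Longrightarrow> (sys_ostate t = S @ [opi, opj] \<and> (\<exists>r. tres i t = Some (ACK r))) \<or> (sys_ostate t = S @ [opj] \<and> tres i t = Some NACK)"
  using assms unfolding Inv_def by simp_all

lemma PC_op1: "PC k opk vk t \<Longrightarrow> (sys_oplist t k 1 = None) = (sys_pc t k \<in> {P0,P1})"
  by (simp add: PC_def)
lemma PC_op2: "PC k opk vk t \<Longrightarrow> sys_oplist t k 2 = None"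
  by (simp add: PC_def)
lemma PC_creg: "PC k opk vk t \<Longrightarrow> sys_creg t k = (if sys_pc t k = P0 then None else Some vk)"
  by (simp add: PC_def)
lemma PC_ctr: "PC k opk vk t \<Longrightarrow> sys_ctr t k = (if sys_pc t k \<in> {P0,P1,P2} then 1 else 2)"
  by (simp add: PC_def)
lemma PC_dec: "PC k opk vk t \<Longrightarrow> (sys_dec t k = None) = (sys_pc t k \<noteq> PDone)"
  by (simp add: PC_def)

lemma tres_nn: "sys_reslist t k 1 \<noteq> None \<Longrightarrow> tres k t \<noteq> None"
  by (simp add: tres_def split: tpc.split)

lemma tres_upd_other[simp]: "k \<noteq> k' \<Longrightarrow> tres k (t\<lparr>sys_tpc := (sys_tpc t)(k' := x)\<rparr>) = tres k t"
  by (simp add: tres_def split: tpc.split)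

lemma inv_task_i_wait:
  assumes I: "Inv t" and w: "sys_tpc t i = TWait"
  shows "Inv (next_task valid execute i t)"
proof (cases "sys_oplist t i (sys_dctr t i)")
  case None
  then show ?thesis using I w by (simp add: next_task_def)
next
  case (Some op)
  have d1: "sys_dctr t i = 1" and r: "sys_reslist t i = (\<lambda>_. None)"
    using iTIi[OF I] PC_op2[OF iPCi[OF I]] w Some by (auto simp: TI_def)
  have op: "op = opi" using iPCi[OF I] Some d1 by (auto simp: PC_def split: if_splits)
  have tr: "tres i t = None" using w r by (simp add: tres_def)
  let ?t = "t\<lparr>sys_tpc := (sys_tpc t)(i := TApply op)\<rparr>"
  have e: "next_task valid execute i t = ?t" using w Some by (simp add: next_task_def)
  have tr': "tres i ?t = None" using r by (simp add: tres_def)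
  have "TI i opi ?t" using d1 op r Some by (simp add: TI_def)
  moreover have "TI j opj ?t" using iTIj[OF I] ij by (simp add: TI_def)
  moreover have "PC i opi v1 ?t" "PC j opj v2 ?t" using iPCi[OF I] iPCj[OF I] by (simp_all add: PC_def)
  ultimately show ?thesis using I ij tr tr' r unfolding e Inv_def by clarsimp
qed

lemma inv_task_i_apply:
  assumes I: "Inv t" and w: "sys_tpc t i = TApply op"
  shows "Inv (next_task valid execute i t)"
proof -
  have d1: "sys_dctr t i = 1" and op: "op = opi" and r: "sys_reslist t i = (\<lambda>_. None)"
    and o1: "sys_oplist t i 1 = Some opi"
    using iTIi[OF I] w by (auto simp: TI_def)
  have tr: "tres i t = None" using w r by (simp add: tres_def)
  have pci: "sys_pc t i = P2" using ipci[OF I] ilres[OF I] PC_op1[OF iPCi[OF I]] o1 r by auto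
  have dj: "sys_dec t j \<noteq> None \<Longrightarrow> tres j t \<noteq> None"
    using irj[OF I] PC_dec[OF iPCj[OF I]] by (intro tres_nn) auto
  show ?thesis
  proof (cases "tres j t = None")
    case True
    then have os: "sys_ostate t = S" using ios1[OF I] tr by simp
    let ?t = "t\<lparr>sys_ostate := sys_ostate t @ [op],
                sys_tpc := (sys_tpc t)(i := TWrite (ACK (execute (sys_ostate t) op i)))\<rparr>"
    have e: "next_task valid execute i t = ?t" using w os op vi by (simp add: next_task_def)
    have tr': "tres i ?t = Some (ACK (execute S opi i))" using os op by (simp add: tres_def)
    have trj: "tres j ?t = tres j t" using ij by (simp add: tres_def split: tpc.split)
    have "TI i opi ?t" using d1 op r o1 by (simp add: TI_def)
    moreover have "TI j opj ?t" using iTIj[OF I] ij by (simp add: TI_def)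
    moreover have "PC i opi v1 ?t" "PC j opj v2 ?t" using iPCi[OF I] iPCj[OF I] by (simp_all add: PC_def)
    ultimately show ?thesis using I ij tr tr' trj r True dj os op pci unfolding e Inv_def by clarsimp
  next
    case False
    then have os: "sys_ostate t = S @ [opj]" using ios3[OF I] tr by simp
    let ?t = "t\<lparr>sys_tpc := (sys_tpc t)(i := TWrite NACK)\<rparr>"
    have e: "next_task valid execute i t = ?t" using w os op nvi by (simp add: next_task_def)
    have tr': "tres i ?t = Some NACK" by (simp add: tres_def)
    have trj: "tres j ?t = tres j t" using ij by (simp add: tres_def split: tpc.split)
    have "TI i opi ?t" using d1 op r o1 by (simp add: TI_def)
    moreover have "TI j opj ?t" using iTIj[OF I] ij by (simp add: TI_def)
    moreover have "PC i opi v1 ?t" "PC j opj v2 ?t" using iPCi[OF I] iPCj[OF I] by (simp_all add: PC_def)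
    ultimately show ?thesis using I ij tr tr' trj r False dj os op pci unfolding e Inv_def by clarsimp
  qed
qed

lemma inv_task_i_write:
  assumes I: "Inv t" and w: "sys_tpc t i = TWrite rr"
  shows "Inv (next_task valid execute i t)"
proof -
  have d1: "sys_dctr t i = 1" and r: "sys_reslist t i = (\<lambda>_. None)"
    and o1: "sys_oplist t i 1 = Some opi"
    using iTIi[OF I] w by (auto simp: TI_def)
  have tr: "tres i t = Some rr" using w by (simp add: tres_def)
  have pci: "sys_pc t i = P2" using ipci[OF I] ilres[OF I] PC_op1[OF iPCi[OF I]] o1 r by auto
  let ?t = "t\<lparr>sys_reslist := (sys_reslist t)(i := (\<lambda>_. None)(1 := Some rr)),
                    sys_dctr := (sys_dctr t)(i := 2),
                    sys_tpc := (sys_tpc t)(i := TWait)\<rparr>"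
  have e: "next_task valid execute i t = ?t" using w d1 r by (simp add: next_task_def numeral_2_eq_2)
  have tr': "tres i ?t = Some rr" by (simp add: tres_def)
  have trj: "tres j ?t = tres j t" using ij by (simp add: tres_def split: tpc.split)
  have "TI i opi ?t" using o1 by (auto simp: TI_def)
  moreover have "TI j opj ?t" using iTIj[OF I] ij by (simp add: TI_def)
  moreover have "PC i opi v1 ?t" "PC j opj v2 ?t" using iPCi[OF I] iPCj[OF I] by (simp_all add: PC_def)
  ultimately show ?thesis using I ij tr tr' trj r pci unfolding e Inv_def by clarsimp
qed

lemma inv_task_j_wait:
  assumes I: "Inv t" and w: "sys_tpc t j = TWait"
  shows "Inv (next_task valid execute j t)"
proof (cases "sys_oplist t j (sys_dctr t j)")
  case None
  then show ?thesis using I w by (simp add: next_task_def)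
next
  case (Some op)
  have d1: "sys_dctr t j = 1" and r: "sys_reslist t j = (\<lambda>_. None)"
    using iTIj[OF I] PC_op2[OF iPCj[OF I]] w Some by (auto simp: TI_def)
  have op: "op = opj" using iPCj[OF I] Some d1 by (auto simp: PC_def split: if_splits)
  have tr: "tres j t = None" using w r by (simp add: tres_def)
  let ?t = "t\<lparr>sys_tpc := (sys_tpc t)(j := TApply op)\<rparr>"
  have e: "next_task valid execute j t = ?t" using w Some by (simp add: next_task_def)
  have tr': "tres j ?t = None" using r by (simp add: tres_def)
  have "TI j opj ?t" using d1 op r Some by (simp add: TI_def)
  moreover have "TI i opi ?t" using iTIi[OF I] ij by (simp add: TI_def)
  moreover have "PC i opi v1 ?t" "PC j opj v2 ?t" using iPCi[OF I] iPCj[OF I] by (simp_all add: PC_def)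
  ultimately show ?thesis using I ij tr tr' r unfolding e Inv_def by clarsimp
qed

lemma inv_task_j_apply:
  assumes I: "Inv t" and w: "sys_tpc t j = TApply op"
  shows "Inv (next_task valid execute j t)"
proof -
  have d1: "sys_dctr t j = 1" and op: "op = opj" and r: "sys_reslist t j = (\<lambda>_. None)"
    and o1: "sys_oplist t j 1 = Some opj"
    using iTIj[OF I] w by (auto simp: TI_def)
  have tr: "tres j t = None" using w r by (simp add: tres_def)
  have pcj: "sys_pc t j \<notin> {P3,P4,P5,PDone}" using irj[OF I] r by auto
  show ?thesis
  proof (cases "tres i t = None")
    case True
    then have os: "sys_ostate t = S" using ios1[OF I] tr by simp
    let ?t = "t\<lparr>sys_ostate := sys_ostate t @ [op],
                sys_tpc := (sys_tpc t)(j := TWrite (ACK (execute (sys_ostate t) op j)))\<rparr>"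
    have e: "next_task valid execute j t = ?t" using w os op vj by (simp add: next_task_def)
    have tr': "tres j ?t = Some (ACK (execute S opj j))" using os op by (simp add: tres_def)
    have tri: "tres i ?t = tres i t" using ij by (simp add: tres_def split: tpc.split)
    have "TI j opj ?t" using d1 op r o1 by (simp add: TI_def)
    moreover have "TI i opi ?t" using iTIi[OF I] ij by (simp add: TI_def)
    moreover have "PC i opi v1 ?t" "PC j opj v2 ?t" using iPCi[OF I] iPCj[OF I] by (simp_all add: PC_def)
    ultimately show ?thesis using I ij tr tr' tri r True os op pcj unfolding e Inv_def by clarsimp
  next
    case False
    then have os: "sys_ostate t = S @ [opi]" and ack: "\<exists>r. tres i t = Some (ACK r)"
      using ios2[OF I] tr by simp_all
    let ?t = "t\<lparr>sys_ostate := sys_ostate t @ [op],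
                sys_tpc := (sys_tpc t)(j := TWrite (ACK (execute (sys_ostate t) op j)))\<rparr>"
    have e: "next_task valid execute j t = ?t" using w os op vji by (simp add: next_task_def)
    have tr': "tres j ?t = Some (ACK (execute (S @ [opi]) opj j))" using os op by (simp add: tres_def)
    have tri: "tres i ?t = tres i t" using ij by (simp add: tres_def split: tpc.split)
    have "TI j opj ?t" using d1 op r o1 by (simp add: TI_def)
    moreover have "TI i opi ?t" using iTIi[OF I] ij by (simp add: TI_def)
    moreover have "PC i opi v1 ?t" "PC j opj v2 ?t" using iPCi[OF I] iPCj[OF I] by (simp_all add: PC_def)
    ultimately show ?thesis using I ij tr tr' tri r False os op pcj ack unfolding e Inv_def by clarsimp
  qed
qed

lemma inv_task_j_write:
  assumes I: "Inv t" and w: "sys_tpc t j = TWrite rr"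
  shows "Inv (next_task valid execute j t)"
proof -
  have d1: "sys_dctr t j = 1" and r: "sys_reslist t j = (\<lambda>_. None)"
    and o1: "sys_oplist t j 1 = Some opj"
    using iTIj[OF I] w by (auto simp: TI_def)
  have tr: "tres j t = Some rr" using w by (simp add: tres_def)
  have pcj: "sys_pc t j \<notin> {P3,P4,P5,PDone}" using irj[OF I] r by auto
  let ?t = "t\<lparr>sys_reslist := (sys_reslist t)(j := (\<lambda>_. None)(1 := Some rr)),
                    sys_dctr := (sys_dctr t)(j := 2),
                    sys_tpc := (sys_tpc t)(j := TWait)\<rparr>"
  have e: "next_task valid execute j t = ?t" using w d1 r by (simp add: next_task_def numeral_2_eq_2)
  have tr': "tres j ?t = Some rr" by (simp add: tres_def)
  have tri: "tres i ?t = tres i t" using ij by (simp add: tres_def split: tpc.split)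
  have "TI j opj ?t" using o1 by (auto simp: TI_def)
  moreover have "TI i opi ?t" using iTIi[OF I] ij by (simp add: TI_def)
  moreover have "PC i opi v1 ?t" "PC j opj v2 ?t" using iPCi[OF I] iPCj[OF I] by (simp_all add: PC_def)
  ultimately show ?thesis using I ij tr tr' tri r pcj unfolding e Inv_def by clarsimp
qed

lemma inv_task:
  assumes "Inv t" "k \<in> {i, j}" shows "Inv (next_task valid execute k t)"
  using assms inv_task_i_wait inv_task_i_apply inv_task_i_write
    inv_task_j_wait inv_task_j_apply inv_task_j_write
  by (cases "sys_tpc t k") auto

lemma TI_res: "TI k opk t \<Longrightarrow> sys_reslist t k 1 = Some r \<Longrightarrow> tres k t = Some r"
  by (auto simp: TI_def tres_def)
lemma TI_op: "TI k opk t \<Longrightarrow> tres k t \<noteq> None \<Longrightarrow> sys_oplist t k 1 = Some opk"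
  by (auto simp: TI_def tres_def)

lemma tres_same:
  "sys_tpc t' = sys_tpc t \<Longrightarrow> sys_reslist t' = sys_reslist t \<Longrightarrow> tres k t' = tres k t"
  by (simp add: tres_def split: tpc.split)

lemma TI_same:
  "sys_tpc t' = sys_tpc t \<Longrightarrow> sys_reslist t' = sys_reslist t \<Longrightarrow> sys_dctr t' = sys_dctr t
   \<Longrightarrow> sys_oplist t' k 1 = sys_oplist t k 1 \<Longrightarrow> TI k opk t' = TI k opk t"
  by (simp add: TI_def)

lemma inv_proc_i:
  assumes I: "Inv t"
  shows "Inv (next_i i j opi v1 t)"
proof -
  have pci: "sys_pc t i \<in> {P0,P1,P2,P3,PDone}" using ipci[OF I] .
  then consider "sys_pc t i = P0" | "sys_pc t i = P1" | "sys_pc t i = P2" | "sys_pc t i = P3"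
    | "sys_pc t i = PDone" by blast
  then show ?thesis
  proof cases
    case 1
    let ?t = "t\<lparr> sys_creg := (sys_creg t)(i := Some v1), sys_pc := (sys_pc t)(i := P1) \<rparr>"
    have e: "next_i i j opi v1 t = ?t" using 1 by (simp add: next_i_def)
    have tr: "tres k ?t = tres k t" for k by (rule tres_same) simp_all
    have "TI i opi ?t = TI i opi t" "TI j opj ?t = TI j opj t" by (rule TI_same; simp)+
    moreover have "PC i opi v1 ?t" using iPCi[OF I] 1 by (simp add: PC_def)
    moreover have "PC j opj v2 ?t" using iPCj[OF I] ij by (simp add: PC_def)
    ultimately show ?thesis using I ij tr 1 unfolding e Inv_def by clarsimp
  next
    case 2
    have o: "sys_oplist t i = (\<lambda>_. None)" and c: "sys_ctr t i = 1"
      using iPCi[OF I] 2 by (simp_all add: PC_def)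
    have tri: "tres i t = None" using TI_op[OF iTIi[OF I]] o by fastforce
    let ?t = "t\<lparr> sys_oplist := (sys_oplist t)(i := (\<lambda>_. None)(1 := Some opi)), sys_pc := (sys_pc t)(i := P2) \<rparr>"
    have e: "next_i i j opi v1 t = ?t" using 2 o c by (simp add: next_i_def)
    have tr: "tres k ?t = tres k t" for k by (rule tres_same) simp_all
    have "TI i opi ?t" using iTIi[OF I] tri by (auto simp: TI_def tres_def)
    moreover have "TI j opj ?t = TI j opj t" using ij by (intro TI_same) simp_all
    moreover have "PC i opi v1 ?t" using iPCi[OF I] 2 by (simp add: PC_def)
    moreover have "PC j opj v2 ?t" using iPCj[OF I] ij by (simp add: PC_def)
    ultimately show ?thesis using I ij tr 2 tri o unfolding e Inv_def by clarsimp
  next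
    case 3
    have c: "sys_ctr t i = 1" using iPCi[OF I] 3 by (simp add: PC_def)
    show ?thesis
    proof (cases "sys_reslist t i 1")
      case None
      then show ?thesis using I 3 c by (simp add: next_i_def)
    next
      case (Some r)
      let ?t = "t\<lparr> sys_lres := (sys_lres t)(i := Some r), sys_ctr := (sys_ctr t)(i := 2),
                    sys_pc := (sys_pc t)(i := P3) \<rparr>"
      have e: "next_i i j opi v1 t = ?t" using 3 c Some by (simp add: next_i_def numeral_2_eq_2)
      have tr: "tres k ?t = tres k t" for k by (rule tres_same) simp_all
      have "TI i opi ?t = TI i opi t" "TI j opj ?t = TI j opj t" by (rule TI_same; simp)+
      moreover have "PC i opi v1 ?t" using iPCi[OF I] 3 by (simp add: PC_def)
      moreover have "PC j opj v2 ?t" using iPCj[OF I] ij by (simp add: PC_def)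
      moreover have "sys_dec t i = None" using PC_dec[OF iPCi[OF I]] 3 by simp
      ultimately show ?thesis using I ij tr 3 Some unfolding e Inv_def by clarsimp
    qed
  next
    case 4
    have l: "sys_lres t i = sys_reslist t i 1" "sys_reslist t i 1 \<noteq> None" using ilres[OF I] 4 by auto
    show ?thesis
    proof (cases "sys_lres t i = Some NACK")
      case True
      have tri: "tres i t = Some NACK" using TI_res[OF iTIi[OF I]] l True by metis
      then have "tres j t \<noteq> None" using ios2[OF I] by auto
      then have "sys_oplist t j 1 = Some opj" using TI_op[OF iTIj[OF I]] by simp
      then have cj: "sys_creg t j = Some v2" using PC_op1[OF iPCj[OF I]] PC_creg[OF iPCj[OF I]] by auto
      let ?t = "t\<lparr> sys_dec := (sys_dec t)(i := Some (Some v2)), sys_pc := (sys_pc t)(i := PDone) \<rparr>"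
      have e: "next_i i j opi v1 t = ?t" using 4 True cj by (simp add: next_i_def)
      have tr: "tres k ?t = tres k t" for k by (rule tres_same) simp_all
      have "TI i opi ?t = TI i opi t" "TI j opj ?t = TI j opj t" by (rule TI_same; simp)+
      moreover have "PC i opi v1 ?t" using iPCi[OF I] 4 by (simp add: PC_def)
      moreover have "PC j opj v2 ?t" using iPCj[OF I] ij by (simp add: PC_def)
      ultimately show ?thesis using I ij tr 4 tri l unfolding e Inv_def by clarsimp
    next
      case False
      obtain r where r: "sys_reslist t i 1 = Some r" using l by auto
      have "r \<noteq> NACK" using False l r by simp
      then obtain x where x: "r = ACK x" by (cases r) auto
      have tri: "tres i t = Some (ACK x)" using TI_res[OF iTIi[OF I]] r x by simp
      let ?t = "t\<lparr> sys_dec := (sys_dec t)(i := Some (Some v1)), sys_pc := (sys_pc t)(i := PDone) \<rparr>"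
      have e: "next_i i j opi v1 t = ?t" using 4 False by (simp add: next_i_def)
      have tr: "tres k ?t = tres k t" for k by (rule tres_same) simp_all
      have "TI i opi ?t = TI i opi t" "TI j opj ?t = TI j opj t" by (rule TI_same; simp)+
      moreover have "PC i opi v1 ?t" using iPCi[OF I] 4 by (simp add: PC_def)
      moreover have "PC j opj v2 ?t" using iPCj[OF I] ij by (simp add: PC_def)
      ultimately show ?thesis using I ij tr 4 tri l unfolding e Inv_def by clarsimp
    qed
  next
    case 5
    then show ?thesis using I by (simp add: next_i_def)
  qed
qed

lemma inv_proc_j:
  assumes I: "Inv t" and st: "step_j i j opi opj v2 t t'"
  shows "Inv t'"
proof -
  consider "sys_pc t j = P0" | "sys_pc t j = P1" | "sys_pc t j = P2" | "sys_pc t j = P3"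
    | "sys_pc t j = P4" | "sys_pc t j = P5" | "sys_pc t j = PDone" by (cases "sys_pc t j") auto
  then show ?thesis
  proof cases
    case 1
    let ?t = "t\<lparr> sys_creg := (sys_creg t)(j := Some v2), sys_pc := (sys_pc t)(j := P1) \<rparr>"
    have e: "t' = ?t" using 1 st by (simp add: step_j_def)
    have tr: "tres k ?t = tres k t" for k by (rule tres_same) simp_all
    have "TI i opi ?t = TI i opi t" "TI j opj ?t = TI j opj t" by (rule TI_same; simp)+
    moreover have "PC j opj v2 ?t" using iPCj[OF I] 1 by (simp add: PC_def)
    moreover have "PC i opi v1 ?t" using iPCi[OF I] ij by (simp add: PC_def)
    ultimately show ?thesis using I ij tr 1 unfolding e Inv_def by clarsimp
  next
    case 2
    have o: "sys_oplist t j = (\<lambda>_. None)" and c: "sys_ctr t j = 1"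
      using iPCj[OF I] 2 by (simp_all add: PC_def)
    have trj: "tres j t = None" using TI_op[OF iTIj[OF I]] o by fastforce
    let ?t = "t\<lparr> sys_oplist := (sys_oplist t)(j := (\<lambda>_. None)(1 := Some opj)), sys_pc := (sys_pc t)(j := P2) \<rparr>"
    have e: "t' = ?t" using 2 o c st by (simp add: step_j_def)
    have tr: "tres k ?t = tres k t" for k by (rule tres_same) simp_all
    have "TI j opj ?t" using iTIj[OF I] trj by (auto simp: TI_def tres_def)
    moreover have "TI i opi ?t = TI i opi t" using ij by (intro TI_same) simp_all
    moreover have "PC j opj v2 ?t" using iPCj[OF I] 2 by (simp add: PC_def)
    moreover have "PC i opi v1 ?t" using iPCi[OF I] ij by (simp add: PC_def)
    ultimately show ?thesis using I ij tr 2 trj o unfolding e Inv_def by clarsimp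
  next
    case 3
    have c: "sys_ctr t j = 1" using iPCj[OF I] 3 by (simp add: PC_def)
    show ?thesis
    proof (cases "sys_reslist t j 1")
      case None
      then show ?thesis using I 3 c st by (simp add: step_j_def)
    next
      case (Some r)
      let ?t = "t\<lparr> sys_lres := (sys_lres t)(j := Some r), sys_ctr := (sys_ctr t)(j := 2),
                    sys_pc := (sys_pc t)(j := P3) \<rparr>"
      have e: "t' = ?t" using 3 c Some st by (simp add: step_j_def numeral_2_eq_2)
      have tr: "tres k ?t = tres k t" for k by (rule tres_same) simp_all
      have "TI i opi ?t = TI i opi t" "TI j opj ?t = TI j opj t" by (rule TI_same; simp)+
      moreover have "PC j opj v2 ?t" using iPCj[OF I] 3 by (simp add: PC_def)
      moreover have "PC i opi v1 ?t" using iPCi[OF I] ij by (simp add: PC_def)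
      moreover have "sys_dec t j = None" using PC_dec[OF iPCj[OF I]] 3 by simp
      ultimately show ?thesis using I ij tr 3 Some unfolding e Inv_def by clarsimp
    qed
  next
    case 4
    have rj: "sys_reslist t j 1 \<noteq> None" using irj[OF I] 4 by simp
    show ?thesis
    proof (cases "\<exists>c. sys_oplist t i c = Some opi")
      case True
      then have o1: "sys_oplist t i 1 = Some opi" and cc: "\<And>c. sys_oplist t i c = Some opi \<Longrightarrow> c = 1"
        using iPCi[OF I] by (auto simp: PC_def split: if_splits)
      let ?t = "t\<lparr> sys_jidx := 1, sys_pc := (sys_pc t)(j := P4) \<rparr>"
      have e: "t' = ?t" using 4 True cc st by (auto simp: step_j_def)
      have tr: "tres k ?t = tres k t" for k by (rule tres_same) simp_all
      have "TI i opi ?t = TI i opi t" "TI j opj ?t = TI j opj t" by (rule TI_same; simp)+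
      moreover have "PC j opj v2 ?t" using iPCj[OF I] 4 by (simp add: PC_def)
      moreover have "PC i opi v1 ?t" using iPCi[OF I] ij by (simp add: PC_def)
      moreover have "sys_dec t j = None" using PC_dec[OF iPCj[OF I]] 4 by simp
      ultimately show ?thesis using I ij tr 4 o1 rj unfolding e Inv_def by clarsimp
    next
      case False
      then have tri: "tres i t = None" using TI_op[OF iTIi[OF I]] by fastforce
      let ?t = "t\<lparr> sys_dec := (sys_dec t)(j := Some (Some v2)), sys_pc := (sys_pc t)(j := PDone) \<rparr>"
      have e: "t' = ?t" using 4 False st by (simp add: step_j_def)
      have tr: "tres k ?t = tres k t" for k by (rule tres_same) simp_all
      have "TI i opi ?t = TI i opi t" "TI j opj ?t = TI j opj t" by (rule TI_same; simp)+
      moreover have "PC j opj v2 ?t" using iPCj[OF I] 4 by (simp add: PC_def)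
      moreover have "PC i opi v1 ?t" using iPCi[OF I] ij by (simp add: PC_def)
      ultimately show ?thesis using I ij tr 4 tri rj unfolding e Inv_def by clarsimp
    qed
  next
    case 5
    have x: "sys_jidx t = 1" "sys_oplist t i 1 = Some opi" using ijx[OF I] 5 by auto
    have rj: "sys_reslist t j 1 \<noteq> None" using irj[OF I] 5 by simp
    show ?thesis
    proof (cases "sys_reslist t i 1")
      case None
      then show ?thesis using I 5 x st by (simp add: step_j_def)
    next
      case (Some r)
      have tri: "tres i t = Some r" using TI_res[OF iTIi[OF I]] Some by simp
      show ?thesis
      proof (cases r)
        case (ACK x')
        let ?t = "t\<lparr> sys_pc := (sys_pc t)(j := P5) \<rparr>"
        have e: "t' = ?t" using 5 x Some ACK st by (simp add: step_j_def)
        have tr: "tres k ?t = tres k t" for k by (rule tres_same) simp_all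
        have "TI i opi ?t = TI i opi t" "TI j opj ?t = TI j opj t" by (rule TI_same; simp)+
        moreover have "PC j opj v2 ?t" using iPCj[OF I] 5 by (simp add: PC_def)
        moreover have "PC i opi v1 ?t" using iPCi[OF I] ij by (simp add: PC_def)
        moreover have "sys_dec t j = None" using PC_dec[OF iPCj[OF I]] 5 by simp
        ultimately show ?thesis using I ij tr 5 x rj Some ACK unfolding e Inv_def by clarsimp
      next
        case NACK
        let ?t = "t\<lparr> sys_dec := (sys_dec t)(j := Some (Some v2)), sys_pc := (sys_pc t)(j := PDone) \<rparr>"
        have e: "t' = ?t" using 5 x Some NACK st by (simp add: step_j_def)
        have tr: "tres k ?t = tres k t" for k by (rule tres_same) simp_all
        have "TI i opi ?t = TI i opi t" "TI j opj ?t = TI j opj t" by (rule TI_same; simp)+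
        moreover have "PC j opj v2 ?t" using iPCj[OF I] 5 by (simp add: PC_def)
        moreover have "PC i opi v1 ?t" using iPCi[OF I] ij by (simp add: PC_def)
        ultimately show ?thesis using I ij tr 5 rj tri NACK unfolding e Inv_def by clarsimp
      qed
    qed
  next
    case 6
    have rj: "sys_reslist t j 1 \<noteq> None" using irj[OF I] 6 by simp
    obtain x where x: "sys_reslist t i 1 = Some (ACK x)" using ij5[OF I] 6 by auto
    have tri: "tres i t = Some (ACK x)" using TI_res[OF iTIi[OF I]] x by simp
    have "sys_oplist t i 1 = Some opi" using TI_op[OF iTIi[OF I]] tri by simp
    then have ci: "sys_creg t i = Some v1" using PC_op1[OF iPCi[OF I]] PC_creg[OF iPCi[OF I]] by auto
    let ?t = "t\<lparr> sys_dec := (sys_dec t)(j := Some (Some v1)), sys_pc := (sys_pc t)(j := PDone) \<rparr>"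
    have e: "t' = ?t" using 6 ci st by (simp add: step_j_def)
    have tr: "tres k ?t = tres k t" for k by (rule tres_same) simp_all
    have "TI i opi ?t = TI i opi t" "TI j opj ?t = TI j opj t" by (rule TI_same; simp)+
    moreover have "PC j opj v2 ?t" using iPCj[OF I] 6 by (simp add: PC_def)
    moreover have "PC i opi v1 ?t" using iPCi[OF I] ij by (simp add: PC_def)
    ultimately show ?thesis using I ij tr 6 rj tri unfolding e Inv_def by clarsimp
  next
    case 7
    then show ?thesis using I st by (simp add: step_j_def)
  qed
qed

lemma inv_step:
  assumes "Inv t" "sys_step valid execute i j opi opj v1 v2 x t t'" shows "Inv t'"
  using assms inv_proc_i inv_proc_j inv_task unfolding sys_step_def by auto


lemma next_i_frame:
  "sys_tpc (next_i i j opi v1 t) = sys_tpc t \<and> sys_reslist (next_i i j opi v1 t) = sys_reslist t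
   \<and> sys_dctr (next_i i j opi v1 t) = sys_dctr t
   \<and> (\<forall>k. k \<noteq> i \<longrightarrow> sys_pc (next_i i j opi v1 t) k = sys_pc t k \<and> sys_dec (next_i i j opi v1 t) k = sys_dec t k
        \<and> sys_oplist (next_i i j opi v1 t) k = sys_oplist t k)"
  by (simp add: next_i_def split: ppc.split option.split)

lemma next_i_mono:
  "sys_oplist t i c \<noteq> None \<Longrightarrow> sys_oplist (next_i i j opi v1 t) i c \<noteq> None"
  "rk (sys_pc t i) \<le> rk (sys_pc (next_i i j opi v1 t) i)"
  "sys_pc t i = PDone \<Longrightarrow> next_i i j opi v1 t = t"
  by (auto simp: next_i_def rk_def split: ppc.split option.split)

lemma step_j_frame:
  "step_j i j opi opj v2 t t' \<Longrightarrow> sys_tpc t' = sys_tpc t \<and> sys_reslist t' = sys_reslist t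
   \<and> sys_dctr t' = sys_dctr t
   \<and> (\<forall>k. k \<noteq> j \<longrightarrow> sys_pc t' k = sys_pc t k \<and> sys_dec t' k = sys_dec t k
        \<and> sys_oplist t' k = sys_oplist t k)"
  by (cases "sys_pc t j") (auto simp: step_j_def split: option.splits resp.splits if_splits)

lemma step_j_mono:
  "step_j i j opi opj v2 t t' \<Longrightarrow> sys_oplist t j c \<noteq> None \<Longrightarrow> sys_oplist t' j c \<noteq> None"
  "step_j i j opi opj v2 t t' \<Longrightarrow> rk (sys_pc t j) \<le> rk (sys_pc t' j)"
  "step_j i j opi opj v2 t t' \<Longrightarrow> sys_pc t j = PDone \<Longrightarrow> t' = t"
  by (cases "sys_pc t j"; auto simp: step_j_def rk_def split: option.splits resp.splits if_splits)+

lemma next_task_frame: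
  "sys_pc (next_task valid execute k t) = sys_pc t \<and> sys_dec (next_task valid execute k t) = sys_dec t
   \<and> sys_oplist (next_task valid execute k t) = sys_oplist t
   \<and> (\<forall>k'. k' \<noteq> k \<longrightarrow> sys_tpc (next_task valid execute k t) k' = sys_tpc t k'
        \<and> sys_reslist (next_task valid execute k t) k' = sys_reslist t k')"
  by (simp add: next_task_def split: tpc.split option.split)

lemma next_task_mono:
  "sys_reslist t k c \<noteq> None \<Longrightarrow> sys_reslist (next_task valid execute k t) k c \<noteq> None"
  by (simp add: next_task_def split: tpc.split option.split)

lemma step_cases:
  assumes "sys_step valid execute i j opi opj v1 v2 x t t'"
  obtains "x = Proc i" "t' = next_i i j opi v1 t"
  | "x = Proc j" "step_j i j opi opj v2 t t'"
  | "x = Task i" "t' = next_task valid execute i t"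
  | "x = Task j" "t' = next_task valid execute j t"
  using assms unfolding sys_step_def by blast

lemma step_oplist: "sys_step valid execute i j opi opj v1 v2 x t t' \<Longrightarrow> sys_oplist t k c \<noteq> None \<Longrightarrow> sys_oplist t' k c \<noteq> None"
  by (erule step_cases; insert ij; cases "k = i"; cases "k = j";
      auto simp: next_i_frame next_i_mono next_task_frame dest: step_j_frame step_j_mono)

lemma step_reslist: "sys_step valid execute i j opi opj v1 v2 x t t' \<Longrightarrow> sys_reslist t k c \<noteq> None \<Longrightarrow> sys_reslist t' k c \<noteq> None"
  by (erule step_cases; insert ij; cases "k = i"; cases "k = j";
      auto simp: next_i_frame next_task_frame next_task_mono dest: step_j_frame)

lemma step_task_frame: "sys_step valid execute i j opi opj v1 v2 x t t' \<Longrightarrow> x \<noteq> Task k \<Longrightarrow>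
   sys_tpc t' k = sys_tpc t k \<and> sys_reslist t' k = sys_reslist t k"
  by (erule step_cases; auto simp: next_i_frame next_task_frame dest: step_j_frame)

lemma step_pc_frame: "sys_step valid execute i j opi opj v1 v2 x t t' \<Longrightarrow> x \<noteq> Proc k \<Longrightarrow>
   sys_pc t' k = sys_pc t k"
  by (erule step_cases; auto simp: next_i_frame next_task_frame dest: step_j_frame)

lemma step_rk: "sys_step valid execute i j opi opj v1 v2 x t t' \<Longrightarrow> rk (sys_pc t k) \<le> rk (sys_pc t' k)"
  by (erule step_cases; insert ij; cases "k = i"; cases "k = j";
      auto simp: next_i_frame next_i_mono next_task_frame dest: step_j_frame step_j_mono)

lemma step_dec: "sys_step valid execute i j opi opj v1 v2 x t t' \<Longrightarrow> Inv t \<Longrightarrow> k \<in> {i,j} \<Longrightarrow>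
   sys_dec t k \<noteq> None \<Longrightarrow> sys_dec t' k = sys_dec t k"
proof -
  assume st: "sys_step valid execute i j opi opj v1 v2 x t t'" and I: "Inv t" and k: "k \<in> {i,j}"
    and d: "sys_dec t k \<noteq> None"
  have pd: "sys_pc t k = PDone" using k d PC_dec[OF iPCi[OF I]] PC_dec[OF iPCj[OF I]] by auto
  from st show ?thesis
    using pd k ij by (cases rule: step_cases; cases "k = i";
      auto simp: next_i_frame next_i_mono next_task_frame dest: step_j_frame step_j_mono)
qed

lemma TI_ex: "Inv t \<Longrightarrow> k \<in> {i,j} \<Longrightarrow> \<exists>opk. TI k opk t"
  using iTIi iTIj by blast

end

locale crun = cons valid execute S i j opi opj v1 v2
  for valid :: "'op list \<Rightarrow> 'op \<Rightarrow> 'p \<Rightarrow> bool"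
    and execute :: "'op list \<Rightarrow> 'op \<Rightarrow> 'p \<Rightarrow> 'r"
    and S :: "'op list" and i j :: 'p and opi opj :: 'op and v1 v2 :: 'v +
  fixes s :: "nat \<Rightarrow> ('p,'op,'v,'r) sys" and a :: "nat \<Rightarrow> 'p actor"
  assumes run: "is_run valid execute S i j opi opj v1 v2 s a" and fr: "fair i j a"
begin

lemma stp: "sys_step valid execute i j opi opj v1 v2 (a n) (s n) (s (Suc n))"
  using run by (simp add: is_run_def)

lemma invs: "Inv (s n)"
proof (induction n)
  case 0 then show ?case using run inv_init by (simp add: is_run_def)
next
  case (Suc n) then show ?case using inv_step stp by blast
qed

lemma stp_task: "a n = Task k \<Longrightarrow> k \<in> {i,j} \<Longrightarrow> s (Suc n) = next_task valid execute k (s n)"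
  using stp[of n] by (cases rule: step_cases) auto

lemma stp_i: "a n = Proc i \<Longrightarrow> s (Suc n) = next_i i j opi v1 (s n)"
  using stp[of n] ij by (cases rule: step_cases) auto

lemma stp_j: "a n = Proc j \<Longrightarrow> step_j i j opi opj v2 (s n) (s (Suc n))"
  using stp[of n] ij by (cases rule: step_cases) auto

lemma rk_mono: "n \<le> m \<Longrightarrow> rk (sys_pc (s n) k) \<le> rk (sys_pc (s m) k)"
  using lift_Suc_mono_le[of "\<lambda>n. rk (sys_pc (s n) k)", OF step_rk[OF stp]] by blast

lemma res_mono: "n \<le> m \<Longrightarrow> sys_reslist (s n) k c \<noteq> None \<Longrightarrow> sys_reslist (s m) k c \<noteq> None"
  by (induction m rule: dec_induct) (simp, metis step_reslist stp)

lemma dec_mono: "n \<le> m \<Longrightarrow> k \<in> {i,j} \<Longrightarrow> sys_dec (s n) k \<noteq> None \<Longrightarrow> sys_dec (s m) k = sys_dec (s n) k"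
  by (induction m rule: dec_induct) (simp, metis step_dec stp invs)

lemma task_live:
  assumes k: "k \<in> {i,j}" and o: "sys_oplist (s n) k 1 \<noteq> None"
  shows "\<exists>m\<ge>n. sys_reslist (s m) k 1 \<noteq> None"
proof (cases "sys_reslist (s n) k 1 = None")
  case False then show ?thesis by blast
next
  case True
  have c: "\<forall>n. \<exists>m\<ge>n. a m = Task k" using fr k by (auto simp: fair_def correct_def)
  let ?P = "\<lambda>t. Inv t \<and> sys_oplist t k 1 \<noteq> None \<and> sys_reslist t k 1 = None"
  let ?Q = "\<lambda>t. sys_reslist t k 1 \<noteq> None"
  let ?f = "\<lambda>t. case sys_tpc t k of TWait \<Rightarrow> 3 | TApply _ \<Rightarrow> 2 | TWrite _ \<Rightarrow> (1::nat)"
  show ?thesis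
  proof (rule progress[where P = ?P and Q = ?Q and f = ?f, OF c])
    show "?P (s n)" using invs o True by simp
  next
    fix n' assume P: "?P (s n')"
    show "?Q (s (Suc n')) \<or> (?P (s (Suc n')) \<and> ?f (s (Suc n')) \<le> ?f (s n') \<and> (a n' = Task k \<longrightarrow> ?f (s (Suc n')) < ?f (s n')))"
    proof (cases "a n' = Task k")
      case True
      then have e: "s (Suc n') = next_task valid execute k (s n')" using stp_task k by blast
      obtain opk where ti: "TI k opk (s n')" using TI_ex P k by blast
      have d1: "sys_dctr (s n') k = 1" using ti P by (auto simp: TI_def)
      have I': "Inv (s (Suc n'))" using invs by blast
      show ?thesis using P d1 I' unfolding e
        by (auto simp: next_task_def split: tpc.splits option.splits)
    next
      case False
      have fr': "sys_tpc (s (Suc n')) k = sys_tpc (s n') k \<and> sys_reslist (s (Suc n')) k = sys_reslist (s n') k"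
        using step_task_frame stp False by blast
      then show ?thesis using P invs step_oplist[OF stp] False by auto
    qed
  qed
qed


lemma phaseA:
  assumes k: "k \<in> {i,j}" and c: "correct a (Proc k)"
  shows "\<exists>m. sys_pc (s m) k \<notin> {P0,P1}"
proof -
  have c': "\<forall>n. \<exists>m\<ge>n. a m = Proc k" using c by (simp add: correct_def)
  let ?P = "\<lambda>t. sys_pc t k \<in> {P0,P1}"
  let ?Q = "\<lambda>t. sys_pc t k \<notin> {P0,P1}"
  let ?f = "\<lambda>t. if sys_pc t k = P0 then 1 else (0::nat)"
  have "\<exists>m\<ge>0. ?Q (s m)"
  proof (rule progress[where P = ?P and Q = ?Q and f = ?f, OF c'])
    show "?P (s 0)" using run by (simp add: is_run_def init_sys_def)
  next
    fix n assume P: "?P (s n)"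
    show "?Q (s (Suc n)) \<or> (?P (s (Suc n)) \<and> ?f (s (Suc n)) \<le> ?f (s n) \<and> (a n = Proc k \<longrightarrow> ?f (s (Suc n)) < ?f (s n)))"
    proof (cases "a n = Proc k")
      case True
      show ?thesis
      proof (cases "k = i")
        case ki: True
        then show ?thesis using True stp_i P by (auto simp: next_i_def)
      next
        case False
        then have kj: "k = j" using k by simp
        then show ?thesis using True stp_j[of n] P by (auto simp: step_j_def)
      qed
    next
      case False
      then show ?thesis using P step_pc_frame[OF stp] by auto
    qed
  qed
  then show ?thesis by blast
qed

lemma live_i:
  assumes c: "correct a (Proc i)"
  shows "\<exists>n. sys_dec (s n) i \<noteq> None"
proof -
  obtain m1 where m1: "sys_pc (s m1) i \<notin> {P0,P1}" using phaseA c by blast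
  then have "sys_oplist (s m1) i 1 \<noteq> None" using PC_op1[OF iPCi[OF invs]] by blast
  then obtain m2 where m2: "m2 \<ge> m1" "sys_reslist (s m2) i 1 \<noteq> None" using task_live by blast
  have "rk (sys_pc (s m1) i) \<le> rk (sys_pc (s m2) i)" using rk_mono m2 by blast
  then have pc2: "sys_pc (s m2) i \<in> {P2,P3,PDone}" using m1 ipci[OF invs[of m2]] by (auto simp: rk_def split: ppc.splits)
  show ?thesis
  proof (cases "sys_pc (s m2) i = PDone")
    case True then show ?thesis using PC_dec[OF iPCi[OF invs]] by blast
  next
    case False
    have c': "\<forall>n. \<exists>m\<ge>n. a m = Proc i" using c by (simp add: correct_def)
    let ?P = "\<lambda>t. Inv t \<and> sys_pc t i \<in> {P2,P3} \<and> sys_reslist t i 1 \<noteq> None"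
    let ?Q = "\<lambda>t. sys_pc t i = PDone"
    let ?f = "\<lambda>t. if sys_pc t i = P2 then 2 else (1::nat)"
    have "\<exists>m\<ge>m2. ?Q (s m)"
    proof (rule progress[where P = ?P and Q = ?Q and f = ?f, OF c'])
      show "?P (s m2)" using invs pc2 False m2 by simp
    next
      fix n assume P: "?P (s n)"
      have I': "Inv (s (Suc n))" using invs by blast
      show "?Q (s (Suc n)) \<or> (?P (s (Suc n)) \<and> ?f (s (Suc n)) \<le> ?f (s n) \<and> (a n = Proc i \<longrightarrow> ?f (s (Suc n)) < ?f (s n)))"
      proof (cases "a n = Proc i")
        case True
        have ct: "sys_pc (s n) i = P2 \<Longrightarrow> sys_ctr (s n) i = 1" using PC_ctr[OF iPCi[OF invs]] by simp
        show ?thesis using True stp_i P I' ct by (auto simp: next_i_def)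
      next
        case False
        then show ?thesis using P I' step_pc_frame[OF stp] step_reslist[OF stp] by auto
      qed
    qed
    then show ?thesis using PC_dec[OF iPCi[OF invs]] by blast
  qed
qed


lemma live_j:
  assumes c: "correct a (Proc j)"
  shows "\<exists>n. sys_dec (s n) j \<noteq> None"
proof -
  have c': "\<forall>n. \<exists>m\<ge>n. a m = Proc j" using c by (simp add: correct_def)
  have dd: "sys_pc (s n) j = PDone \<Longrightarrow> sys_dec (s n) j \<noteq> None" for n
    using PC_dec[OF iPCj[OF invs]] by blast
  obtain m1 where m1: "sys_pc (s m1) j \<notin> {P0,P1}" using phaseA c by blast
  then have "sys_oplist (s m1) j 1 \<noteq> None" using PC_op1[OF iPCj[OF invs]] by blast
  then obtain m2 where m2: "m2 \<ge> m1" "sys_reslist (s m2) j 1 \<noteq> None" using task_live by blast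
  have "rk (sys_pc (s m1) j) \<le> rk (sys_pc (s m2) j)" using rk_mono m2 by blast
  then have pc2: "sys_pc (s m2) j \<notin> {P0,P1}" using m1 by (auto simp: rk_def split: ppc.splits)
  have "\<exists>m3\<ge>m2. sys_pc (s m3) j \<in> {P4,P5,PDone}"
  proof (cases "sys_pc (s m2) j \<in> {P4,P5,PDone}")
    case True then show ?thesis by blast
  next
    case False
    let ?P = "\<lambda>t. Inv t \<and> sys_pc t j \<in> {P2,P3} \<and> sys_reslist t j 1 \<noteq> None"
    let ?Q = "\<lambda>t. sys_pc t j \<in> {P4,P5,PDone}"
    let ?f = "\<lambda>t. if sys_pc t j = P2 then 2 else (1::nat)"
    show ?thesis
    proof (rule progress[where P = ?P and Q = ?Q and f = ?f, OF c'])
      show "?P (s m2)" using invs pc2 False m2 by (cases "sys_pc (s m2) j") auto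
    next
      fix n assume P: "?P (s n)"
      have I': "Inv (s (Suc n))" using invs by blast
      show "?Q (s (Suc n)) \<or> (?P (s (Suc n)) \<and> ?f (s (Suc n)) \<le> ?f (s n) \<and> (a n = Proc j \<longrightarrow> ?f (s (Suc n)) < ?f (s n)))"
      proof (cases "a n = Proc j")
        case True
        have ct: "sys_pc (s n) j = P2 \<Longrightarrow> sys_ctr (s n) j = 1" using PC_ctr[OF iPCj[OF invs]] by simp
        show ?thesis using True stp_j[of n] P I' ct by (auto simp: step_j_def split: if_splits)
      next
        case False
        then show ?thesis using P I' step_pc_frame[OF stp] step_reslist[OF stp] by auto
      qed
    qed
  qed
  then obtain m3 where m3: "m3 \<ge> m2" "sys_pc (s m3) j \<in> {P4,P5,PDone}" by blast
  show ?thesis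
  proof (cases "sys_pc (s m3) j = PDone")
    case True then show ?thesis using dd by blast
  next
    case False
    then have "sys_oplist (s m3) i 1 \<noteq> None" using ijx[OF invs] m3 by auto
    then obtain m4 where m4: "m4 \<ge> m3" "sys_reslist (s m4) i 1 \<noteq> None" using task_live by blast
    have "rk (sys_pc (s m3) j) \<le> rk (sys_pc (s m4) j)" using rk_mono m4 by blast
    then have pc4: "sys_pc (s m4) j \<in> {P4,P5,PDone}" using m3 by (auto simp: rk_def split: ppc.splits)
    show ?thesis
    proof (cases "sys_pc (s m4) j = PDone")
      case True then show ?thesis using dd by blast
    next
      case False
      let ?P = "\<lambda>t. Inv t \<and> sys_pc t j \<in> {P4,P5} \<and> sys_reslist t i 1 \<noteq> None"
      let ?Q = "\<lambda>t. sys_pc t j = PDone"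
      let ?f = "\<lambda>t. if sys_pc t j = P4 then 2 else (1::nat)"
      have "\<exists>m\<ge>m4. ?Q (s m)"
      proof (rule progress[where P = ?P and Q = ?Q and f = ?f, OF c'])
        show "?P (s m4)" using invs pc4 False m4 by auto
      next
        fix n assume P: "?P (s n)"
        have I': "Inv (s (Suc n))" using invs by blast
        show "?Q (s (Suc n)) \<or> (?P (s (Suc n)) \<and> ?f (s (Suc n)) \<le> ?f (s n) \<and> (a n = Proc j \<longrightarrow> ?f (s (Suc n)) < ?f (s n)))"
        proof (cases "a n = Proc j")
          case True
          have jx: "sys_pc (s n) j = P4 \<Longrightarrow> sys_jidx (s n) = 1" using ijx[OF invs] by simp
          show ?thesis using True stp_j[of n] P I' jx by (auto simp: step_j_def split: option.splits resp.splits)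
        next
          case False
          then show ?thesis using P I' step_pc_frame[OF stp] step_reslist[OF stp] by auto
        qed
      qed
      then show ?thesis using dd by blast
    qed
  qed
qed

lemma agree:
  assumes "sys_dec (s n) i = Some x" "sys_dec (s m) j = Some y" shows "x = y"
proof -
  let ?N = "max n m"
  have x: "sys_dec (s ?N) i = Some x" using dec_mono[of n ?N i] assms by simp
  have y: "sys_dec (s ?N) j = Some y" using dec_mono[of m ?N j] assms by simp
  show ?thesis using idi[OF invs x] idj[OF invs y] by auto
qed

end

theorem mainTheorem8:
  fixes valid :: "'op list \<Rightarrow> 'op \<Rightarrow> 'p \<Rightarrow> bool"
    and execute :: "'op list \<Rightarrow> 'op \<Rightarrow> 'p \<Rightarrow> 'r"
    and S :: "'op list" and i j :: 'p and opi opj :: 'op and v1 v2 :: 'v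
    and s :: "nat \<Rightarrow> ('p, 'op, 'v, 'r) sys" and a :: "nat \<Rightarrow> 'p actor"
  assumes "i \<noteq> j"
    and "opi \<notin> set S" and "opj \<notin> set S"
    and "valid S opi i" and "valid S opj j"
    and "\<not> valid (S @ [opj]) opi i"
    and "valid (S @ [opi]) opj j"
    and "is_run valid execute S i j opi opj v1 v2 s a"
    and "fair i j a"
  shows "(\<forall>k\<in>{i, j}. correct a (Proc k) \<longrightarrow> (\<exists>n. sys_dec (s n) k \<noteq> None))
       \<and> (\<forall>n m x y. sys_dec (s n) i = Some x \<longrightarrow> sys_dec (s m) j = Some y \<longrightarrow> x = y)
       \<and> (\<forall>n k x. k \<in> {i, j} \<longrightarrow> sys_dec (s n) k = Some x \<longrightarrow> x = Some v1 \<or> x = Some v2)"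
proof -
  interpret crun valid execute S i j opi opj v1 v2 s a
    by unfold_locales (use assms in auto)
  have A: "\<forall>k\<in>{i, j}. correct a (Proc k) \<longrightarrow> (\<exists>n. sys_dec (s n) k \<noteq> None)"
    using live_i live_j by blast
  have B: "\<forall>n m x y. sys_dec (s n) i = Some x \<longrightarrow> sys_dec (s m) j = Some y \<longrightarrow> x = y"
    using agree by blast
  have C: "\<forall>n k x. k \<in> {i, j} \<longrightarrow> sys_dec (s n) k = Some x \<longrightarrow> x = Some v1 \<or> x = Some v2"
  proof (intro allI impI)
    fix n k x assume k: "k \<in> {i, j}" and d: "sys_dec (s n) k = Some x"
    show "x = Some v1 \<or> x = Some v2"
    proof (cases "k = i")
      case True then show ?thesis using idi[OF invs, of n x] d by auto
    next
      case False then have "k = j" using k by simp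
      then show ?thesis using idj[OF invs, of n x] d by auto
    qed
  qed
  show ?thesis using A B C by blast
qed

end
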